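(* Let $d^{gen}_{GH}$ be any one of $d_{GH},d^{us}_{GH},d^{ls}_{GH},d^{rc}_{GH}$, and let $X,Y$ be nonempty metric spaces. Then: (1) $2d^{gen}_{GH}(\Delta_1,X)=\operatorname{diam}X$; (2) $2d^{gen}_{GH}(X,Y)\le\max\{\operatorname{diam}X,\operatorname{diam}Y\}$; (3) if $\operatorname{diam}X<\infty$ or $\operatorname{diam}Y<\infty$, then $|\operatorname{diam}X-\operatorname{diam}Y|\le 2d^{gen}_{GH}(X,Y)$; (4) if $\operatorname{diam}X<\infty$, then for all $\lambda,\mu\ge0$, $2d^{gen}_{GH}(\lambda X,\mu X)=|\lambda-\mu|\operatorname{diam}X$; (5) for every $\lambda>0$, $d^{gen}_{GH}(\lambda X,\lambda Y)=\lambda\, d^{gen}_{GH}(X,Y)$, and if $X,Y$ are bounded this also holds for $\lambda=0$; (6) if $X$ and $Y$ are discrete metric spaces, then $d^{gen}_{GH}(X,Y)=d_{GH}(X,Y)$; (7) if a sequence of metric spaces $X_n$ satisfies $d^{gen}_{GH}(X_n,X)\to0$, then $d_{GH}(X_n,X)\to0$.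
   Context: For a metric space, $|xy|$ denotes distance, $\operatorname{diam}X=\sup\{|xy|:x,y\in X\}$, $\Delta_1$ is the one-point metric space, $\lambda X$ for $\lambda>0$ is $X$ with all distances multiplied by $\lambda$, and $0X=\Delta_1$ for bounded $X$. A set-valued map $f:X\rightrightarrows Y$ assigns to each $x\in X$ a nonempty $f(x)\subseteq Y$ and is identified with its graph. A correspondence between $X$ and $Y$ is a subset $R\subseteq X\times Y$ whose projections to $X$ and to $Y$ are both surjective, regarded as the set-valued map $x\mapsto R(x)=\{y:(x,y)\in R\}$; $R^{-1}=\{(y,x):(x,y)\in R\}$; $\mathcal R(X,Y)$ is the set of all correspondences. The distortion of a nonempty $\sigma\subseteq X\times Y$ is $\operatorname{dis}\sigma=\sup\{||xx'|-|yy'||:(x,y),(x',y')\in\sigma\}\in[0,\infty]$. A set-valued map $f$ between topological spaces is upper semicontinuous if for every $x$ and every open $U\supseteq f(x)$ there is a neighborhood $V$ of $x$ with $f(x')\subseteq U$ for all $x'\in V$; lower semicontinuous if for every $x$ and every open $U$ with $f(x)\cap U\ne\emptyset$ there is a neighborhood $V$ of $x$ with $f(x')\cap U\neq\emptyset$ for all $x'\in V$; continuous if both. $\mathcal R_{us}(X,Y)$ (resp. $\mathcal R_{ls}(X,Y)$, $\mathcal R_{rc}(X,Y)$) is the set of $R\in\mathcal R(X,Y)$ such that both $R$ and $R^{-1}$ are upper semicontinuous (resp. lower semicontinuous, continuous). Then $d_{GH}(X,Y)=\frac12\inf\{\operatorname{dis}R:R\in\mathcal R(X,Y)\}$, and $d^{us}_{GH},d^{ls}_{GH},d^{rc}_{GH}$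 are defined by the same formula with $\mathcal R$ replaced by $\mathcal R_{us},\mathcal R_{ls},\mathcal R_{rc}$ respectively. *)

theory Defs
  imports "HOL-Analysis.Analysis"
begin

text \<open>A metric space is represented by a carrier set M together with a distance
  function d, subject to the library locale Metric_space M d.
  Its topology is mtopology M d.\<close>

definition diam :: "'a set \<Rightarrow> ('a \<Rightarrow> 'a \<Rightarrow> real) \<Rightarrow> ereal" where
  "diam M d = (SUP x\<in>M. SUP y\<in>M. ereal (d x y))"

definition Delta1_set :: "unit set" where "Delta1_set = {()}"
definition Delta1_dist :: "unit \<Rightarrow> unit \<Rightarrow> real" where "Delta1_dist = (\<lambda>_ _. 0)"

text \<open>Scaled space lambda X: carrier and distance. For lambda = 0 the carrier is collapsed
  to a single point of M (so 0X is a one-point space, i.e. isometric to Delta1).\<close>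
definition scale_set :: "real \<Rightarrow> 'a set \<Rightarrow> 'a set" where
  "scale_set l M = (if l = 0 then {SOME x. x \<in> M} else M)"
definition scale_dist :: "real \<Rightarrow> ('a \<Rightarrow> 'a \<Rightarrow> real) \<Rightarrow> 'a \<Rightarrow> 'a \<Rightarrow> real" where
  "scale_dist l d = (\<lambda>x y. l * d x y)"

definition correspondence :: "'a set \<Rightarrow> 'b set \<Rightarrow> ('a \<times> 'b) set \<Rightarrow> bool" where
  "correspondence M N R \<longleftrightarrow> R \<subseteq> M \<times> N \<and> fst ` R = M \<and> snd ` R = N"

definition dis :: "('a \<Rightarrow> 'a \<Rightarrow> real) \<Rightarrow> ('b \<Rightarrow> 'b \<Rightarrow> real) \<Rightarrow> ('a \<times> 'b) set \<Rightarrow> ereal" where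
  "dis d e \<sigma> = (SUP p\<in>\<sigma>. SUP q\<in>\<sigma>. ereal \<bar>d (fst p) (fst q) - e (snd p) (snd q)\<bar>)"

definition usc :: "'a topology \<Rightarrow> 'b topology \<Rightarrow> ('a \<times> 'b) set \<Rightarrow> bool" where
  "usc S T R \<longleftrightarrow> (\<forall>x\<in>topspace S. \<forall>U. openin T U \<and> R``{x} \<subseteq> U \<longrightarrow>
      (\<exists>V. openin S V \<and> x \<in> V \<and> (\<forall>x'\<in>V. R``{x'} \<subseteq> U)))"

definition lsc :: "'a topology \<Rightarrow> 'b topology \<Rightarrow> ('a \<times> 'b) set \<Rightarrow> bool" where
  "lsc S T R \<longleftrightarrow> (\<forall>x\<in>topspace S. \<forall>U. openin T U \<and> R``{x} \<inter> U \<noteq> {} \<longrightarrow>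
      (\<exists>V. openin S V \<and> x \<in> V \<and> (\<forall>x'\<in>V. R``{x'} \<inter> U \<noteq> {})))"

datatype gh_kind = GH | GH_us | GH_ls | GH_rc

definition corrs :: "gh_kind \<Rightarrow> 'a set \<Rightarrow> ('a \<Rightarrow> 'a \<Rightarrow> real) \<Rightarrow> 'b set \<Rightarrow> ('b \<Rightarrow> 'b \<Rightarrow> real)
    \<Rightarrow> ('a \<times> 'b) set set" where
  "corrs k M d N e = {R. correspondence M N R \<and>
     (let S = Metric_space.mtopology M d; T = Metric_space.mtopology N e in
      (case k of
         GH \<Rightarrow> True
       | GH_us \<Rightarrow> usc S T R \<and> usc T S (converse R)
       | GH_ls \<Rightarrow> lsc S T R \<and> lsc T S (converse R)
       | GH_rc \<Rightarrow> usc S T R \<and> usc T S (converse R) \<and> lsc S T R \<and> lsc T S (converse R)))}"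

definition dGH :: "gh_kind \<Rightarrow> 'a set \<Rightarrow> ('a \<Rightarrow> 'a \<Rightarrow> real) \<Rightarrow> 'b set \<Rightarrow> ('b \<Rightarrow> 'b \<Rightarrow> real) \<Rightarrow> ereal" where
  "dGH k M d N e = (1/2) * (INF R\<in>corrs k M d N e. dis d e R)"

definition discrete_mspace :: "'a set \<Rightarrow> ('a \<Rightarrow> 'a \<Rightarrow> real) \<Rightarrow> bool" where
  "discrete_mspace M d \<longleftrightarrow> Metric_space.mtopology M d = discrete_topology M"

end

theory Submission
  imports Defs
begin

lemma half_ereal: "(1/2::ereal) = ereal (1/2)"
  by (simp add: one_ereal_def)

lemma two_half: "2 * ((1/2) * (x::ereal)) = x"
  unfolding half_ereal by (cases x) auto

lemma two_dGH: "2 * dGH k M d N e = (INF R\<in>corrs k M d N e. dis d e R)"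
  unfolding dGH_def by (rule two_half)

lemma INF_ereal_cmult:
  assumes "0 < (c::real)"
  shows "(INF i\<in>I. ereal c * f i) = ereal c * (INF i\<in>I. f i)"
proof -
  have "bij ((*) (ereal c))"
    apply (rule bij_betw_byWitness[of _ "\<lambda>x. (x::ereal) / c"], auto simp: assms ereal_mult_divide)
    using assms ereal_divide_eq by auto
  moreover have "mono ((*) (ereal c))"
    by (simp add: assms ereal_mult_left_mono less_imp_le mono_def)
  ultimately have "ereal c * Inf (f ` I) = Inf ((*) (ereal c) ` f ` I)"
    by (simp add: mono_bij_Inf)
  then show ?thesis by (simp add: image_comp o_def)
qed

lemma dis_ge: "p \<in> R \<Longrightarrow> q \<in> R \<Longrightarrow> ereal \<bar>d (fst p) (fst q) - e (snd p) (snd q)\<bar> \<le> dis d e R"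
  unfolding dis_def by (intro SUP_upper2[of p] SUP_upper2[of q]) auto

lemma dis_nonneg: "R \<noteq> {} \<Longrightarrow> 0 \<le> dis d e R"
proof -
  assume "R \<noteq> {}" then obtain p where "p \<in> R" by auto
  then show ?thesis using dis_ge[of p R p d e] by (meson abs_ge_zero ereal_less_eq(5) order_trans)
qed

lemma dis_le: "(\<And>p q. p \<in> R \<Longrightarrow> q \<in> R \<Longrightarrow> ereal \<bar>d (fst p) (fst q) - e (snd p) (snd q)\<bar> \<le> B) \<Longrightarrow> dis d e R \<le> B"
  unfolding dis_def by (intro SUP_least) auto

lemma diam_ge: "x \<in> M \<Longrightarrow> y \<in> M \<Longrightarrow> ereal (d x y) \<le> diam M d"
  unfolding diam_def by (intro SUP_upper2[of x] SUP_upper2[of y]) auto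

lemma diam_le: "(\<And>x y. x \<in> M \<Longrightarrow> y \<in> M \<Longrightarrow> ereal (d x y) \<le> B) \<Longrightarrow> diam M d \<le> B"
  unfolding diam_def by (intro SUP_least) auto

lemma diam_nonneg: "Metric_space M d \<Longrightarrow> M \<noteq> {} \<Longrightarrow> 0 \<le> diam M d"
  by (metis all_not_in_conv diam_ge Metric_space.nonneg ereal_less_eq(5) order_trans)

lemma corr_nonempty: "R \<in> corrs k M d N e \<Longrightarrow> M \<noteq> {} \<Longrightarrow> R \<noteq> {}"
  unfolding corrs_def correspondence_def by auto

lemma corrs_GH: "corrs GH M d N e = {R. correspondence M N R}"
  unfolding corrs_def by simp

lemma corrs_sub: "corrs k M d N e \<subseteq> corrs GH M d N e"
  unfolding corrs_def by auto

lemma dGH_nonneg: "M \<noteq> {} \<Longrightarrow> 0 \<le> dGH k M d N e"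
proof -
  assume "M \<noteq> {}"
  then have h: "0 \<le> (INF R\<in>corrs k M d N e. dis d e R)"
    by (intro INF_greatest dis_nonneg) (auto dest: corr_nonempty)
  then show ?thesis unfolding dGH_def half_ereal using ereal_mult_left_mono[OF h, of "ereal (1/2)"] by simp
qed

lemma dGH_GH_le: "dGH GH M d N e \<le> dGH k M d N e"
  unfolding dGH_def half_ereal
  by (intro ereal_mult_left_mono INF_superset_mono corrs_sub) auto


lemma usc_full: "topspace S = M \<Longrightarrow> usc S T (M \<times> N)"
  unfolding usc_def by (intro ballI allI impI exI[of _ "topspace S"]) auto

lemma lsc_full: "topspace S = M \<Longrightarrow> lsc S T (M \<times> N)"
  unfolding lsc_def by (intro ballI allI impI exI[of _ "topspace S"]) auto

lemma full_in_corrs: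
  assumes "Metric_space M d" "Metric_space N e" "M \<noteq> {}" "N \<noteq> {}"
  shows "M \<times> N \<in> corrs k M d N e"
proof -
  have c: "correspondence M N (M \<times> N)" using assms(3,4) unfolding correspondence_def by auto
  have t1: "topspace (Metric_space.mtopology M d) = M" using Metric_space.topspace_mtopology[OF assms(1)] .
  have t2: "topspace (Metric_space.mtopology N e) = N" using Metric_space.topspace_mtopology[OF assms(2)] .
  have cv: "converse (M \<times> N) = N \<times> M" by auto
  show ?thesis unfolding corrs_def using c usc_full[OF t1] usc_full[OF t2] lsc_full[OF t1] lsc_full[OF t2]
    by (cases k) (auto simp: cv Let_def)
qed

lemma usc_lsc_discrete: "S = discrete_topology M \<Longrightarrow> usc S T R \<and> lsc S T R"
  unfolding usc_def lsc_def by (auto intro!: exI[of _ "{_}"])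

lemma usc_Id: "usc T T (Id_on (topspace T))"
  unfolding usc_def apply (intro ballI allI impI)
  subgoal for x U by (rule exI[of _ U]) (auto dest: openin_subset)
  done

lemma lsc_Id: "lsc T T (Id_on (topspace T))"
  unfolding lsc_def apply (intro ballI allI impI)
  subgoal for x U by (rule exI[of _ U]) (auto dest: openin_subset)
  done

lemma Metric_space_scale: "Metric_space M d \<Longrightarrow> 0 < l \<Longrightarrow> Metric_space M (scale_dist l d)"
  unfolding scale_dist_def Metric_space_def
  by (auto simp: mult.commute distrib_left[symmetric] intro: mult_left_mono)

lemma mtopology_scale:
  assumes m: "Metric_space M d" and l: "0 < l"
  shows "Metric_space.mtopology M (scale_dist l d) = Metric_space.mtopology M d"
proof -
  interpret A: Metric_space M d by (rule m)
  interpret B: Metric_space M "scale_dist l d" by (rule Metric_space_scale[OF m l])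
  have mb: "B.mball x r = A.mball x (r / l)" for x r
    using l unfolding set_eq_iff A.in_mball B.in_mball by (auto simp: scale_dist_def field_simps mult.commute)
  have mb2: "A.mball x r = B.mball x (r * l)" for x r
    using l unfolding set_eq_iff A.in_mball B.in_mball by (auto simp: scale_dist_def field_simps mult.commute)
  show ?thesis
  proof (rule topology_eq[THEN iffD2], intro allI)
    fix U
    show "openin B.mtopology U = openin A.mtopology U"
      unfolding A.openin_mtopology B.openin_mtopology
      by (metis mb mb2 l divide_pos_pos mult_pos_pos)
  qed
qed

lemma corrs_scale:
  assumes "Metric_space M d" "Metric_space N e" "0 < l"
  shows "corrs k (scale_set l M) (scale_dist l d) (scale_set l N) (scale_dist l e) = corrs k M d N e"
  using assms by (simp add: corrs_def scale_set_def mtopology_scale)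


lemma dis_scale:
  assumes "0 \<le> l" "R \<noteq> {}"
  shows "dis (scale_dist l d) (scale_dist l e) R = ereal l * dis d e R"
proof -
  have eq: "ereal \<bar>l * a - l * b\<bar> = ereal l * ereal \<bar>a - b\<bar>" for a b
    using assms(1) by (simp add: right_diff_distrib[symmetric] abs_mult)
  have "ereal l * dis d e R = (SUP p\<in>R. ereal l * (SUP q\<in>R. ereal \<bar>d (fst p) (fst q) - e (snd p) (snd q)\<bar>))"
    unfolding dis_def by (rule Sup_ereal_mult_left'[OF assms(2) assms(1)])
  also have "\<dots> = (SUP p\<in>R. SUP q\<in>R. ereal l * ereal \<bar>d (fst p) (fst q) - e (snd p) (snd q)\<bar>)"
    by (intro SUP_cong refl Sup_ereal_mult_left'[OF assms(2) assms(1)])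
  finally show ?thesis unfolding dis_def scale_dist_def eq by simp
qed

lemma diam_scale:
  assumes "0 \<le> l" "M \<noteq> {}"
  shows "diam M (scale_dist l d) = ereal l * diam M d"
proof -
  have "ereal l * diam M d = (SUP x\<in>M. ereal l * (SUP y\<in>M. ereal (d x y)))"
    unfolding diam_def by (rule Sup_ereal_mult_left'[OF assms(2) assms(1)])
  also have "\<dots> = (SUP x\<in>M. SUP y\<in>M. ereal l * ereal (d x y))"
    by (intro SUP_cong refl Sup_ereal_mult_left'[OF assms(2) assms(1)])
  finally show ?thesis unfolding diam_def scale_dist_def by simp
qed

lemma dis_conv_le: "dis e d (converse R) \<le> dis d e R"
proof (rule dis_le)
  fix p q assume "p \<in> converse R" "q \<in> converse R"
  then have "(snd p, fst p) \<in> R" "(snd q, fst q) \<in> R" by auto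
  from dis_ge[OF this, of d e] show "ereal \<bar>e (fst p) (fst q) - d (snd p) (snd q)\<bar> \<le> dis d e R"
    by (simp add: abs_minus_commute)
qed

lemma dis_conv: "dis e d (converse R) = dis d e R"
  using dis_conv_le[of e d R] dis_conv_le[of d e "converse R"] by simp

lemma correspondence_conv: "correspondence M N R \<Longrightarrow> correspondence N M (converse R)"
  unfolding correspondence_def by (auto simp: image_iff) force+

lemma corrs_conv: "R \<in> corrs k M d N e \<Longrightarrow> converse R \<in> corrs k N e M d"
  unfolding corrs_def using correspondence_conv by (cases k) (auto simp: Let_def)

lemma half_twice: "(x::ereal) = ereal (1/2) * (2 * x)"
  by (cases x) auto

lemma dGH_sym_le: "2 * dGH k N e M d \<le> 2 * dGH k M d N e"
  unfolding two_dGH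
proof (rule INF_greatest)
  fix R assume "R \<in> corrs k M d N e"
  then show "(INF R\<in>corrs k N e M d. dis e d R) \<le> dis d e R"
    by (intro INF_lower2[OF corrs_conv]) (auto simp: dis_conv)
qed

lemma dGH_sym: "dGH k N e M d = dGH k M d N e"
proof -
  have "2 * dGH k N e M d = 2 * dGH k M d N e"
    using dGH_sym_le[of k N e M d] dGH_sym_le[of k M d N e] by simp
  then show ?thesis by (metis half_twice)
qed

lemma Metric_space_single: "Metric_space {p} (\<lambda>_ _. 0)"
  by (simp add: Metric_space_def)

lemma single_dGH:
  assumes "Metric_space N e" "N \<noteq> {}"
  shows "2 * dGH k {p} (\<lambda>_ _. 0) N e = diam N e"
proof -
  have mem: "{p} \<times> N \<in> corrs k {p} (\<lambda>_ _. 0) N e"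
    by (rule full_in_corrs[OF Metric_space_single assms(1) _ assms(2)]) simp
  have all: "R = {p} \<times> N" if "R \<in> corrs k {p} (\<lambda>_ _. 0) N e" for R
    using that unfolding corrs_def correspondence_def by force
  have dv: "dis (\<lambda>_ _. 0) e ({p} \<times> N) = diam N e"
  proof (rule antisym)
    show "dis (\<lambda>_ _. 0) e ({p} \<times> N) \<le> diam N e"
      by (rule dis_le) (auto simp: Metric_space.nonneg[OF assms(1)] intro!: diam_ge)
    show "diam N e \<le> dis (\<lambda>_ _. 0) e ({p} \<times> N)"
    proof (rule diam_le)
      fix x y assume "x \<in> N" "y \<in> N"
      then show "ereal (e x y) \<le> dis (\<lambda>_ _. 0) e ({p} \<times> N)"
        using dis_ge[of "(p,x)" "{p} \<times> N" "(p,y)" "\<lambda>_ _. 0" e] Metric_space.nonneg[OF assms(1)] by simp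
    qed
  qed
  have "(INF R\<in>corrs k {p} (\<lambda>_ _. 0) N e. dis (\<lambda>_ _. 0) e R) = (INF R\<in>corrs k {p} (\<lambda>_ _. 0) N e. diam N e)"
    by (rule INF_cong) (simp, metis all dv)
  also have "\<dots> = diam N e" using mem by (intro INF_const) auto
  finally show ?thesis unfolding two_dGH .
qed

lemma diam_le_dis:
  assumes "correspondence M N R"
  shows "diam N e \<le> dis d e R + diam M d"
proof (rule diam_le)
  fix y y' assume "y \<in> N" "y' \<in> N"
  then obtain x x' where r: "(x,y) \<in> R" "(x',y') \<in> R" using assms unfolding correspondence_def by force
  then have xm: "x \<in> M" "x' \<in> M" using assms unfolding correspondence_def by auto
  have "ereal (e y y') \<le> ereal \<bar>d x x' - e y y'\<bar> + ereal (d x x')" by simp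
  also have "\<dots> \<le> dis d e R + diam M d"
    using dis_ge[OF r, of d e] diam_ge[OF xm, of d] by (intro add_mono) auto
  finally show "ereal (e y y') \<le> dis d e R + diam M d" .
qed

lemma ereal_abs_aux:
  fixes A B D :: ereal
  assumes "0 \<le> A" "0 \<le> B" "A \<le> D + B" "B \<le> D + A" "A < \<infinity> \<or> B < \<infinity>"
  shows "\<bar>A - B\<bar> \<le> D"
  using assms by (cases A; cases B; cases D) auto

lemma diam_diff_le_dis:
  assumes "correspondence M N R" "Metric_space M d" "Metric_space N e" "M \<noteq> {}" "N \<noteq> {}"
    "diam M d < \<infinity> \<or> diam N e < \<infinity>"
  shows "\<bar>diam M d - diam N e\<bar> \<le> dis d e R"
proof -
  have "diam M d \<le> dis e d (converse R) + diam N e"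
    by (rule diam_le_dis[OF correspondence_conv[OF assms(1)]])
  then have "diam M d \<le> dis d e R + diam N e" by (simp add: dis_conv)
  then show ?thesis
    using diam_le_dis[OF assms(1), of e d] diam_nonneg[OF assms(2,4)] diam_nonneg[OF assms(3,5)] assms(6)
    by (intro ereal_abs_aux) auto
qed

lemma diam_diff_le_dGH:
  assumes "Metric_space M d" "Metric_space N e" "M \<noteq> {}" "N \<noteq> {}"
    "diam M d < \<infinity> \<or> diam N e < \<infinity>"
  shows "\<bar>diam M d - diam N e\<bar> \<le> 2 * dGH k M d N e"
  unfolding two_dGH
  by (rule INF_greatest, rule diam_diff_le_dis[OF _ assms]) (auto simp: corrs_def)

lemma dis_full_le:
  assumes "Metric_space M d" "Metric_space N e"
  shows "dis d e (M \<times> N) \<le> max (diam M d) (diam N e)"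
proof (rule dis_le)
  fix p q assume pq: "p \<in> M \<times> N" "q \<in> M \<times> N"
  let ?a = "d (fst p) (fst q)" and ?b = "e (snd p) (snd q)"
  have "\<bar>?a - ?b\<bar> \<le> max ?a ?b"
  proof -
    have "0 \<le> ?a" "0 \<le> ?b" using Metric_space.nonneg[OF assms(1)] Metric_space.nonneg[OF assms(2)] by auto
    then show ?thesis by linarith
  qed
  then have "ereal \<bar>?a - ?b\<bar> \<le> max (ereal ?a) (ereal ?b)" by (cases "?a \<le> ?b") (auto simp: max_def)
  also have "\<dots> \<le> max (diam M d) (diam N e)"
    using pq by (intro max.mono diam_ge) auto
  finally show "ereal \<bar>?a - ?b\<bar> \<le> max (diam M d) (diam N e)" .
qed


lemma scale0: "scale_set 0 M = {SOME x. x \<in> M}" "scale_dist 0 d = (\<lambda>_ _. 0)"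
  by (auto simp: scale_set_def scale_dist_def)

lemma scale_pos: "0 < l \<Longrightarrow> scale_set l M = M"
  by (simp add: scale_set_def)

lemma diam_single0: "diam {q} (\<lambda>_ _. 0) = 0"
  by (simp add: diam_def)

lemma part4:
  assumes mX: "Metric_space X dX" and ne: "X \<noteq> {}" and fin: "diam X dX < \<infinity>"
    and l: "0 \<le> l" and m: "0 \<le> m"
  shows "2 * dGH k (scale_set l X) (scale_dist l dX) (scale_set m X) (scale_dist m dX)
             = ereal \<bar>l - m\<bar> * diam X dX"
proof -
  obtain A where A: "diam X dX = ereal A" "0 \<le> A"
    using diam_nonneg[OF mX ne] fin by (cases "diam X dX") auto
  have single_scaled: "2 * dGH k {q} (\<lambda>_ _. 0) X (scale_dist m' dX) = ereal \<bar>0 - m'\<bar> * diam X dX"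
    if "0 < m'" for m' q
    using single_dGH[OF Metric_space_scale[OF mX that] ne] diam_scale[of m' X dX] that ne by simp
  show ?thesis
  proof (cases "l = 0")
    case True
    note l0 = True
    show ?thesis
    proof (cases "m = 0")
      case True
      then show ?thesis using l0 single_dGH[OF Metric_space_single, of _ k] by (simp add: scale0 diam_single0 zero_ereal_def[symmetric])
    next
      case False
      then show ?thesis using l0 m single_scaled[of m] by (simp add: scale0 scale_pos)
    qed
  next
    case False
    then have lp: "0 < l" using l by simp
    show ?thesis
    proof (cases "m = 0")
      case True
      then show ?thesis using lp single_scaled[of l "SOME x. x \<in> X"] dGH_sym[of k X "scale_dist l dX" "{SOME x. x \<in> X}" "\<lambda>_ _. 0"] by (simp add: scale0 scale_pos abs_minus_commute)
    next
      case False
      then have mp: "0 < m" using m by simp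
      let ?T = "Metric_space.mtopology X dX"
      have tT: "topspace ?T = X" using Metric_space.topspace_mtopology[OF mX] .
      have cI: "correspondence X X (Id_on X)" unfolding correspondence_def by (auto simp: image_iff) force+
      have idc: "Id_on X \<in> corrs k X (scale_dist l dX) X (scale_dist m dX)"
        unfolding corrs_def using usc_Id[of ?T] lsc_Id[of ?T] cI
        by (cases k) (auto simp: mtopology_scale[OF mX lp] mtopology_scale[OF mX mp] tT correspondence_def Let_def)
      have up: "dis (scale_dist l dX) (scale_dist m dX) (Id_on X) \<le> ereal \<bar>l - m\<bar> * diam X dX"
      proof (rule dis_le)
        fix p q assume pq: "p \<in> Id_on X" "q \<in> Id_on X"
        then have x: "fst p \<in> X" "fst q \<in> X" "snd p = fst p" "snd q = fst q" by auto
        have nn: "0 \<le> dX (fst p) (fst q)" using Metric_space.nonneg[OF mX] .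
        have "ereal \<bar>scale_dist l dX (fst p) (fst q) - scale_dist m dX (snd p) (snd q)\<bar>
            = ereal \<bar>l - m\<bar> * ereal (dX (fst p) (fst q))"
          using nn x by (simp add: scale_dist_def left_diff_distrib[symmetric] abs_mult)
        also have "\<dots> \<le> ereal \<bar>l - m\<bar> * diam X dX"
          by (intro ereal_mult_left_mono diam_ge x) auto
        finally show "ereal \<bar>scale_dist l dX (fst p) (fst q) - scale_dist m dX (snd p) (snd q)\<bar>
            \<le> ereal \<bar>l - m\<bar> * diam X dX" .
      qed
      have "2 * dGH k X (scale_dist l dX) X (scale_dist m dX) \<le> ereal \<bar>l - m\<bar> * diam X dX"
        unfolding two_dGH using idc up by (rule INF_lower2)
      moreover have "\<bar>diam X (scale_dist l dX) - diam X (scale_dist m dX)\<bar> \<le> 2 * dGH k X (scale_dist l dX) X (scale_dist m dX)"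
        using diam_scale[OF l ne, of dX] diam_scale[OF m ne, of dX] A
        by (intro diam_diff_le_dGH Metric_space_scale mX lp mp ne) auto
      moreover have "\<bar>diam X (scale_dist l dX) - diam X (scale_dist m dX)\<bar> = ereal \<bar>l - m\<bar> * diam X dX"
        using diam_scale[OF l ne, of dX] diam_scale[OF m ne, of dX] A
        by (simp add: left_diff_distrib[symmetric] abs_mult)
      ultimately show ?thesis using lp mp by (simp add: scale_pos)
    qed
  qed
qed


lemma part5:
  assumes mX: "Metric_space X dX" and neX: "X \<noteq> {}" and mY: "Metric_space Y dY" and neY: "Y \<noteq> {}"
    and l: "0 \<le> l"
  shows "dGH k (scale_set l X) (scale_dist l dX) (scale_set l Y) (scale_dist l dY) = ereal l * dGH k X dX Y dY"
proof (cases "l = 0")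
  case True
  have h2: "2 * dGH k {SOME x. x \<in> X} (\<lambda>_ _. 0) {SOME x. x \<in> Y} (\<lambda>_ _. 0) = diam {SOME x. x \<in> Y} (\<lambda>_ _. 0)"
    by (rule single_dGH[OF Metric_space_single]) simp
  have h0: "dGH k {SOME x. x \<in> X} (\<lambda>_ _. 0) {SOME x. x \<in> Y} (\<lambda>_ _. 0) = 0"
    by (subst half_twice, unfold h2 diam_single0) simp
  have r0: "ereal 0 * dGH k X dX Y dY = 0" by (simp add: zero_ereal_def[symmetric])
  show ?thesis unfolding True scale0 r0 by (rule h0)
next
  case False
  then have lp: "0 < l" using l by simp
  have "(INF R\<in>corrs k X dX Y dY. dis (scale_dist l dX) (scale_dist l dY) R)
      = (INF R\<in>corrs k X dX Y dY. ereal l * dis dX dY R)"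
    using l neX by (intro INF_cong refl dis_scale) (auto dest: corr_nonempty)
  also have "\<dots> = ereal l * (INF R\<in>corrs k X dX Y dY. dis dX dY R)"
    by (rule INF_ereal_cmult[OF lp])
  finally have e: "(INF R\<in>corrs k X dX Y dY. dis (scale_dist l dX) (scale_dist l dY) R) = ereal l * (INF R\<in>corrs k X dX Y dY. dis dX dY R)" .
  show ?thesis
    unfolding dGH_def scale_pos[OF lp] corrs_scale[OF mX mY lp, unfolded scale_pos[OF lp]] e by (rule mult.left_commute)
qed

lemma part6:
  assumes "discrete_mspace X dX" "discrete_mspace Y dY"
  shows "dGH k X dX Y dY = dGH GH X dX Y dY"
proof -
  have X: "Metric_space.mtopology X dX = discrete_topology X" and Y: "Metric_space.mtopology Y dY = discrete_topology Y"
    using assms unfolding discrete_mspace_def by auto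
  have u: "usc (discrete_topology M) T R \<and> lsc (discrete_topology M) T R" for M and T :: "'q topology" and R :: "('p \<times> 'q) set"
    by (rule usc_lsc_discrete) (rule refl)
  have "corrs k X dX Y dY = corrs GH X dX Y dY"
    unfolding corrs_def Let_def X Y by (cases k) (simp_all add: u)
  then show ?thesis unfolding dGH_def by simp
qed

lemma part7:
  fixes Xs :: "nat \<Rightarrow> 'c set" and dXs :: "nat \<Rightarrow> 'c \<Rightarrow> 'c \<Rightarrow> real"
  assumes "\<forall>n. Metric_space (Xs n) (dXs n) \<and> Xs n \<noteq> {}"
    and "(\<lambda>n. dGH k (Xs n) (dXs n) X dX) \<longlonglongrightarrow> 0"
  shows "(\<lambda>n. dGH GH (Xs n) (dXs n) X dX) \<longlonglongrightarrow> 0"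
proof -
  have a: "0 \<le> dGH GH (Xs n) (dXs n) X dX" for n using assms(1) by (intro dGH_nonneg) auto
  have b: "dGH GH (Xs n) (dXs n) X dX \<le> dGH k (Xs n) (dXs n) X dX" for n by (rule dGH_GH_le)
  show ?thesis
  proof (rule tendsto_sandwich[where f="\<lambda>n. 0" and h="\<lambda>n. dGH k (Xs n) (dXs n) X dX"])
    show "\<forall>\<^sub>F n in sequentially. 0 \<le> dGH GH (Xs n) (dXs n) X dX" using a by simp
    show "\<forall>\<^sub>F n in sequentially. dGH GH (Xs n) (dXs n) X dX \<le> dGH k (Xs n) (dXs n) X dX" using b by simp
    show "((\<lambda>n. 0) \<longlongrightarrow> 0) sequentially" by (rule tendsto_const)
    show "(\<lambda>n. dGH k (Xs n) (dXs n) X dX) \<longlonglongrightarrow> 0" by (rule assms(2))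
  qed
qed

theorem mainTheorem11:
  fixes k :: gh_kind
    and X :: "'a set" and dX :: "'a \<Rightarrow> 'a \<Rightarrow> real"
    and Y :: "'b set" and dY :: "'b \<Rightarrow> 'b \<Rightarrow> real"
  assumes "Metric_space X dX" and "X \<noteq> {}"
    and "Metric_space Y dY" and "Y \<noteq> {}"
  shows
    "(2 * dGH k Delta1_set Delta1_dist X dX = diam X dX)
   \<and> (2 * dGH k X dX Y dY \<le> max (diam X dX) (diam Y dY))
   \<and> ((diam X dX < \<infinity> \<or> diam Y dY < \<infinity>) \<longrightarrow>
           \<bar>diam X dX - diam Y dY\<bar> \<le> 2 * dGH k X dX Y dY)
   \<and> (diam X dX < \<infinity> \<longrightarrow> (\<forall>l m. 0 \<le> l \<and> 0 \<le> m \<longrightarrow>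
           2 * dGH k (scale_set l X) (scale_dist l dX) (scale_set m X) (scale_dist m dX)
             = ereal \<bar>l - m\<bar> * diam X dX))
   \<and> (\<forall>l. (0 < l \<or> (l = 0 \<and> diam X dX < \<infinity> \<and> diam Y dY < \<infinity>)) \<longrightarrow>
           dGH k (scale_set l X) (scale_dist l dX) (scale_set l Y) (scale_dist l dY)
             = ereal l * dGH k X dX Y dY)
   \<and> ((discrete_mspace X dX \<and> discrete_mspace Y dY) \<longrightarrow>
           dGH k X dX Y dY = dGH GH X dX Y dY)
   \<and> (\<forall>(Xs :: nat \<Rightarrow> 'c set) (dXs :: nat \<Rightarrow> 'c \<Rightarrow> 'c \<Rightarrow> real).
         (\<forall>n. Metric_space (Xs n) (dXs n) \<and> Xs n \<noteq> {}) \<longrightarrow>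
         ((\<lambda>n. dGH k (Xs n) (dXs n) X dX) \<longlonglongrightarrow> 0) \<longrightarrow>
         ((\<lambda>n. dGH GH (Xs n) (dXs n) X dX) \<longlonglongrightarrow> 0))"
proof -
  have p1: "2 * dGH k Delta1_set Delta1_dist X dX = diam X dX"
    unfolding Delta1_set_def Delta1_dist_def by (rule single_dGH[OF assms(1,2)])
  have p2: "2 * dGH k X dX Y dY \<le> max (diam X dX) (diam Y dY)"
    unfolding two_dGH using full_in_corrs[OF assms(1,3,2,4)] dis_full_le[OF assms(1,3)] by (rule INF_lower2)
  have p3: "(diam X dX < \<infinity> \<or> diam Y dY < \<infinity>) \<longrightarrow>
           \<bar>diam X dX - diam Y dY\<bar> \<le> 2 * dGH k X dX Y dY"
    using diam_diff_le_dGH[OF assms(1,3,2,4)] by blast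
  have p4: "diam X dX < \<infinity> \<longrightarrow> (\<forall>l m. 0 \<le> l \<and> 0 \<le> m \<longrightarrow>
           2 * dGH k (scale_set l X) (scale_dist l dX) (scale_set m X) (scale_dist m dX)
             = ereal \<bar>l - m\<bar> * diam X dX)"
    using part4[OF assms(1,2)] by blast
  have p5: "\<forall>l. (0 < l \<or> (l = 0 \<and> diam X dX < \<infinity> \<and> diam Y dY < \<infinity>)) \<longrightarrow>
           dGH k (scale_set l X) (scale_dist l dX) (scale_set l Y) (scale_dist l dY)
             = ereal l * dGH k X dX Y dY"
  proof (intro allI impI)
    fix l :: real assume "0 < l \<or> (l = 0 \<and> diam X dX < \<infinity> \<and> diam Y dY < \<infinity>)"
    then have "0 \<le> l" by auto
    then show "dGH k (scale_set l X) (scale_dist l dX) (scale_set l Y) (scale_dist l dY)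
             = ereal l * dGH k X dX Y dY" by (rule part5[OF assms])
  qed
  have p6: "(discrete_mspace X dX \<and> discrete_mspace Y dY) \<longrightarrow>
           dGH k X dX Y dY = dGH GH X dX Y dY"
    using part6 by blast
  have p7: "\<forall>(Xs :: nat \<Rightarrow> 'c set) (dXs :: nat \<Rightarrow> 'c \<Rightarrow> 'c \<Rightarrow> real).
         (\<forall>n. Metric_space (Xs n) (dXs n) \<and> Xs n \<noteq> {}) \<longrightarrow>
         ((\<lambda>n. dGH k (Xs n) (dXs n) X dX) \<longlonglongrightarrow> 0) \<longrightarrow>
         ((\<lambda>n. dGH GH (Xs n) (dXs n) X dX) \<longlonglongrightarrow> 0)"
  proof (intro allI impI)
    fix Xs :: "nat \<Rightarrow> 'c set" and dXs :: "nat \<Rightarrow> 'c \<Rightarrow> 'c \<Rightarrow> real"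
    assume "\<forall>n. Metric_space (Xs n) (dXs n) \<and> Xs n \<noteq> {}" "(\<lambda>n. dGH k (Xs n) (dXs n) X dX) \<longlonglongrightarrow> 0"
    then show "(\<lambda>n. dGH GH (Xs n) (dXs n) X dX) \<longlonglongrightarrow> 0" by (rule part7)
  qed
  show ?thesis using p1 p2 p3 p4 p5 p6 p7 by (intro conjI)
qed

end
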